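(* Let $0\le s<n$ and $A\in M_{s+1,n-s}$. There is a constant $K>0$ depending only on $A$ (and $n$) such that for every $1\le j\le n$ and every $w\in\mathcal S_{n+1,j}$ with $\|R_Ac(w)\|<1$ one has $\|w\|\le K\big(1+\|\pi_\bullet(w)\|\big)$.
   Context: $V=\mathbb R^{n+1}$ with basis $e_0,\dots,e_n$, $V_0=\mathrm{span}(e_1,\dots,e_n)$, $V_\bullet=\mathrm{span}(e_{s+1},\dots,e_n)$; $e_I=e_{i_1}\wedge\dots\wedge e_{i_j}$ for $I=\{i_1<\dots<i_j\}$; $\bigwedge(V)$ carries the inner product making $\{e_I\}$ orthonormal. $\mathcal S_{n+1,j}$ is the set of $w=v_1\wedge\dots\wedge v_j$ with $v_1,\dots,v_j\in\mathbb Z^{n+1}$ linearly independent. $\pi_\bullet$ is the orthogonal projection $\bigwedge^j(V)\to\bigwedge^j(V_\bullet)$. $c(w)_i=\sum_{J\subset\{1,\dots,n\},\#J=j-1}\langle e_i\wedge e_J,w\rangle e_J$. Index the columns of $A$ by $s+1,\dots,n$ and its rows by $0,\dots,s$; $R_A=(I_{s+1}\ A)\in M_{s+1,n+1}$, so $R_Ac(w)\in(\bigwedge^{j-1}V_0)^{s+1}$ has $i$-th component $c(w)_i+\sum_{k=s+1}^n a_{i,k}c(w)_k=\sum_J\langle(e_i+a_i)\wedge e_J,w\rangle e_J$, where $a_i=\sum_{k=s+1}^na_{i,k}e_k$; norms are Euclidean. *)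

theory Defs
  imports "HOL-Analysis.Analysis"
begin

text \<open>V = R^(n+1) with basis e_0..e_n. An element of the j-th exterior power
  is represented by its coordinate function on index sets I (the coefficient of e_I);
  coordinates with I not a j-subset of {0..n} are irrelevant/zero.
  A family of j vectors in Z^(n+1) is vs :: nat => nat => int, vs k i being the i-th
  coordinate of the k-th vector (k < j, i <= n).\<close>

definition int_lin_indep :: "nat \<Rightarrow> nat \<Rightarrow> (nat \<Rightarrow> nat \<Rightarrow> int) \<Rightarrow> bool" where
  "int_lin_indep n j vs \<longleftrightarrow>
     (\<forall>c :: nat \<Rightarrow> real. (\<forall>i\<le>n. (\<Sum>k<j. c k * real_of_int (vs k i)) = 0) \<longrightarrow> (\<forall>k<j. c k = 0))"

text \<open>Coefficient of e_I in v_1 wedge ... wedge v_j: the determinant (Leibniz formula) of the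
  j x j minor on the rows i_1 < ... < i_j of I.\<close>
definition wedge :: "nat \<Rightarrow> (nat \<Rightarrow> nat \<Rightarrow> int) \<Rightarrow> nat set \<Rightarrow> real" where
  "wedge j vs I = (if card I = j then
      (\<Sum>\<sigma> | \<sigma> permutes {..<j}. real_of_int (sign \<sigma>) *
          (\<Prod>k<j. real_of_int (vs k (sorted_list_of_set I ! \<sigma> k))))
    else 0)"

definition S_set :: "nat \<Rightarrow> nat \<Rightarrow> (nat set \<Rightarrow> real) set" where
  "S_set n j = {wedge j vs | vs. int_lin_indep n j vs}"

definition ext_norm :: "nat \<Rightarrow> nat \<Rightarrow> (nat set \<Rightarrow> real) \<Rightarrow> real" where
  "ext_norm n j w = sqrt (\<Sum>I\<in>{I. I \<subseteq> {0..n} \<and> card I = j}. (w I)\<^sup>2)"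

text \<open>Norm of the orthogonal projection pi_bullet onto the j-th exterior power of
  V_bullet = span(e_{s+1},...,e_n).\<close>
definition proj_norm :: "nat \<Rightarrow> nat \<Rightarrow> nat \<Rightarrow> (nat set \<Rightarrow> real) \<Rightarrow> real" where
  "proj_norm n s j w = sqrt (\<Sum>I\<in>{I. I \<subseteq> {s+1..n} \<and> card I = j}. (w I)\<^sup>2)"

text \<open>< e_i wedge e_J , w >\<close>
definition ctr :: "(nat set \<Rightarrow> real) \<Rightarrow> nat \<Rightarrow> nat set \<Rightarrow> real" where
  "ctr w i J = (if i \<in> J then 0 else (-1) ^ card {k\<in>J. k < i} * w (insert i J))"

text \<open>J-coefficient of the i-th component (i = 0..s) of R_A c(w):
  < e_i wedge e_J, w > + sum_{k=s+1}^n a_{i,k} < e_k wedge e_J, w >.\<close>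
definition RAc :: "nat \<Rightarrow> nat \<Rightarrow> (nat \<Rightarrow> nat \<Rightarrow> real) \<Rightarrow> (nat set \<Rightarrow> real) \<Rightarrow> nat \<Rightarrow> nat set \<Rightarrow> real" where
  "RAc n s A w i J = ctr w i J + (\<Sum>k\<in>{s+1..n}. A i k * ctr w k J)"

definition RAc_norm :: "nat \<Rightarrow> nat \<Rightarrow> nat \<Rightarrow> (nat \<Rightarrow> nat \<Rightarrow> real) \<Rightarrow> (nat set \<Rightarrow> real) \<Rightarrow> real" where
  "RAc_norm n s j A w = sqrt (\<Sum>i\<in>{0..s}. \<Sum>J\<in>{J. J \<subseteq> {1..n} \<and> card J = j - 1}. (RAc n s A w i J)\<^sup>2)"

end

theory Submission
  imports Defs
begin

lemma abs_le_sqrt_sum: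
  fixes f :: "'a \<Rightarrow> real"
  assumes "finite S" "x \<in> S"
  shows "\<bar>f x\<bar> \<le> sqrt (\<Sum>y\<in>S. (f y)\<^sup>2)"
proof -
  have "(f x)\<^sup>2 \<le> (\<Sum>y\<in>S. (f y)\<^sup>2)"
    using assms by (intro member_le_sum) auto
  then have "sqrt ((f x)\<^sup>2) \<le> sqrt (\<Sum>y\<in>S. (f y)\<^sup>2)" by (rule real_sqrt_le_mono)
  then show ?thesis by simp
qed

lemma sq_le_double_sum:
  fixes g :: "nat \<Rightarrow> nat set \<Rightarrow> real"
  assumes "finite S" "finite T" "i \<in> S" "J \<in> T"
  shows "(g i J)\<^sup>2 \<le> (\<Sum>i\<in>S. \<Sum>J\<in>T. (g i J)\<^sup>2)"
proof -
  have "(g i J)\<^sup>2 \<le> (\<Sum>J\<in>T. (g i J)\<^sup>2)"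
    using assms by (intro member_le_sum) auto
  also have "\<dots> \<le> (\<Sum>i\<in>S. \<Sum>J\<in>T. (g i J)\<^sup>2)"
    using assms by (intro member_le_sum[where f="\<lambda>i. \<Sum>J\<in>T. (g i J)\<^sup>2"] sum_nonneg) auto
  finally show ?thesis .
qed

theorem lemma5p1:
  fixes n s :: nat and A :: "nat \<Rightarrow> nat \<Rightarrow> real"
  assumes "s < n"
  shows "\<exists>K>0. \<forall>j w. 1 \<le> j \<and> j \<le> n \<and> w \<in> S_set n j \<and> RAc_norm n s j A w < 1
           \<longrightarrow> ext_norm n j w \<le> K * (1 + proj_norm n s j w)"
proof -
  define \<alpha> where "\<alpha> = (\<Sum>i\<in>{0..s}. \<Sum>k\<in>{s+1..n}. \<bar>A i k\<bar>)"
  have \<alpha>0: "\<alpha> \<ge> 0" unfolding \<alpha>_def by (intro sum_nonneg) auto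
  have \<alpha>i: "(\<Sum>k\<in>{s+1..n}. \<bar>A i k\<bar>) \<le> \<alpha>" if "i \<le> s" for i
    unfolding \<alpha>_def using that
    by (intro member_le_sum[where f="\<lambda>i. \<Sum>k\<in>{s+1..n}. \<bar>A i k\<bar>"] sum_nonneg) auto
  define K where "K = 2 ^ (n+1) * (1 + \<alpha>) ^ (s+1)"
  have K0: "K > 0" unfolding K_def using \<alpha>0 by simp
  show ?thesis
  proof (intro exI[of _ K] conjI allI impI K0)
    fix j w
    assume H: "1 \<le> j \<and> j \<le> n \<and> w \<in> S_set n j \<and> RAc_norm n s j A w < 1"
    define P where "P = proj_norm n s j w"
    have P0: "P \<ge> 0" unfolding P_def proj_norm_def by (simp add: sum_nonneg)
    have R1: "\<bar>RAc n s A w i J\<bar> \<le> 1" if "i \<le> s" "J \<subseteq> {1..n}" "card J = j - 1" for i J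
    proof -
      have "(RAc n s A w i J)\<^sup>2 \<le> (\<Sum>i\<in>{0..s}. \<Sum>J\<in>{J. J \<subseteq> {1..n} \<and> card J = j - 1}. (RAc n s A w i J)\<^sup>2)"
        using that by (intro sq_le_double_sum) auto
      then have "sqrt ((RAc n s A w i J)\<^sup>2) \<le> RAc_norm n s j A w"
        unfolding RAc_norm_def by (rule real_sqrt_le_mono)
      then show ?thesis using H by simp
    qed
    have base: "\<bar>w I\<bar> \<le> P" if "I \<subseteq> {s+1..n}" "card I = j" for I
      unfolding P_def proj_norm_def
      by (rule abs_le_sqrt_sum) (use that in auto)
    have main: "\<forall>I. I \<subseteq> {0..n} \<and> card I = j \<and> card (I \<inter> {0..s}) = m
                 \<longrightarrow> \<bar>w I\<bar> \<le> (1 + \<alpha>) ^ m * (1 + P)" for m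
    proof (induction m)
      case 0
      show ?case
      proof (intro allI impI)
        fix I assume I: "I \<subseteq> {0..n} \<and> card I = j \<and> card (I \<inter> {0..s}) = 0"
        have "I \<inter> {0..s} = {}" using I by (metis card_0_eq finite_Int finite_atLeastAtMost)
        then have "I \<subseteq> {s+1..n}"
        proof (intro subsetI)
          fix y assume "y \<in> I"
          then have "y \<le> n" "\<not> y \<le> s" using I \<open>I \<inter> {0..s} = {}\<close> by auto
          then show "y \<in> {s+1..n}" by simp
        qed
        then have "\<bar>w I\<bar> \<le> P" using base I by auto
        then show "\<bar>w I\<bar> \<le> (1 + \<alpha>) ^ 0 * (1 + P)" by simp
      qed
    next
      case (Suc m)
      show ?case
      proof (intro allI impI)
        fix I assume I: "I \<subseteq> {0..n} \<and> card I = j \<and> card (I \<inter> {0..s}) = Suc m"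
        have finI: "finite I" using I finite_subset by blast
        have "I \<inter> {0..s} \<noteq> {}" using I by auto
        then obtain x where x: "x \<in> I" "x \<le> s" by auto
        define i where "i = Min I"
        have iI: "i \<in> I" unfolding i_def using finI x by (intro Min_in) auto
        have imin: "\<And>y. y \<in> I \<Longrightarrow> i \<le> y" unfolding i_def using finI by auto
        have iS: "i \<le> s" using imin[OF x(1)] x by simp
        define J where "J = I - {i}"
        have finJ: "finite J" using finI J_def by simp
        have J1: "J \<subseteq> {1..n}" using I imin unfolding J_def by force
        have cJ: "card J = j - 1" using I iI finI unfolding J_def by simp
        have jpos: "j \<ge> 1" using H by simp
        have ctri: "ctr w i J = w I"
        proof -
          have "{k\<in>J. k < i} = {}" using imin unfolding J_def by force
          moreover have "insert i J = I" using iI unfolding J_def by auto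
          moreover have "i \<notin> J" unfolding J_def by simp
          ultimately show ?thesis unfolding ctr_def by (simp only: card.empty power_0 mult_1 if_False)
        qed
        define B where "B = (1 + \<alpha>) ^ m * (1 + P)"
        have "1 * 1 \<le> (1 + \<alpha>) ^ m * (1 + P)"
          by (rule mult_mono) (use \<alpha>0 P0 in auto)
        then have B1: "1 \<le> B" unfolding B_def by simp
        have ctrk: "\<bar>ctr w k J\<bar> \<le> B" if k: "k \<in> {s+1..n}" for k
        proof (cases "k \<in> J")
          case True then show ?thesis using B1 unfolding ctr_def by simp
        next
          case False
          have sub: "insert k J \<subseteq> {0..n}" using J1 k by auto
          have c: "card (insert k J) = j" using False finJ cJ jpos by simp
          have "insert k J \<inter> {0..s} = (I \<inter> {0..s}) - {i}"
            using k unfolding J_def by auto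
          then have c2: "card (insert k J \<inter> {0..s}) = m"
            using I iI iS finI by simp
          have "\<bar>w (insert k J)\<bar> \<le> B" using Suc.IH sub c c2 unfolding B_def by blast
          then show ?thesis using False unfolding ctr_def by (simp add: abs_mult)
        qed
        have "w I = RAc n s A w i J - (\<Sum>k\<in>{s+1..n}. A i k * ctr w k J)"
          unfolding RAc_def ctri by simp
        then have "\<bar>w I\<bar> \<le> \<bar>RAc n s A w i J\<bar> + \<bar>\<Sum>k\<in>{s+1..n}. A i k * ctr w k J\<bar>"
          by (metis abs_triangle_ineq4)
        also have "\<dots> \<le> 1 + (\<Sum>k\<in>{s+1..n}. \<bar>A i k\<bar> * B)"
        proof (rule add_mono)
          show "\<bar>RAc n s A w i J\<bar> \<le> 1" using R1 iS J1 cJ by simp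
          have "\<bar>\<Sum>k\<in>{s+1..n}. A i k * ctr w k J\<bar> \<le> (\<Sum>k\<in>{s+1..n}. \<bar>A i k * ctr w k J\<bar>)"
            by (rule sum_abs)
          also have "\<dots> \<le> (\<Sum>k\<in>{s+1..n}. \<bar>A i k\<bar> * B)"
            by (intro sum_mono) (simp add: abs_mult ctrk mult_left_mono)
          finally show "\<bar>\<Sum>k\<in>{s+1..n}. A i k * ctr w k J\<bar> \<le> (\<Sum>k\<in>{s+1..n}. \<bar>A i k\<bar> * B)" .
        qed
        also have "\<dots> = 1 + (\<Sum>k\<in>{s+1..n}. \<bar>A i k\<bar>) * B" by (simp add: sum_distrib_right)
        also have "\<dots> \<le> B + \<alpha> * B"
          using \<alpha>i[OF iS] B1 by (intro add_mono mult_right_mono) auto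
        also have "\<dots> = (1 + \<alpha>) ^ Suc m * (1 + P)" unfolding B_def by (simp add: algebra_simps)
        finally show "\<bar>w I\<bar> \<le> (1 + \<alpha>) ^ Suc m * (1 + P)" .
      qed
    qed
    define M where "M = (1 + \<alpha>) ^ (s+1) * (1 + P)"
    have M0: "M \<ge> 0" unfolding M_def using \<alpha>0 P0 by simp
    have bnd: "\<bar>w I\<bar> \<le> M" if "I \<subseteq> {0..n}" "card I = j" for I
    proof -
      have "\<bar>w I\<bar> \<le> (1 + \<alpha>) ^ card (I \<inter> {0..s}) * (1 + P)" using main that by blast
      also have "\<dots> \<le> M" unfolding M_def
      proof (intro mult_right_mono power_increasing)
        show "card (I \<inter> {0..s}) \<le> s + 1"
        proof -
          have "card (I \<inter> {0..s}) \<le> card {0..s}" by (intro card_mono) auto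
          then show ?thesis by simp
        qed
      qed (use \<alpha>0 P0 in auto)
      finally show ?thesis .
    qed
    define S where "S = {I. I \<subseteq> {0..n} \<and> card I = j}"
    have cS: "card S \<le> 2 ^ (n+1)"
    proof -
      have "S \<subseteq> Pow {0..n}" unfolding S_def by auto
      then have "card S \<le> card (Pow {0..n})" by (intro card_mono) auto
      then show ?thesis by (simp add: card_Pow)
    qed
    have "(\<Sum>I\<in>S. (w I)\<^sup>2) \<le> (\<Sum>I\<in>S. M\<^sup>2)"
    proof (rule sum_mono)
      fix I assume "I \<in> S"
      then have "\<bar>w I\<bar> \<le> M" using bnd unfolding S_def by auto
      then show "(w I)\<^sup>2 \<le> M\<^sup>2" by (metis abs_le_square_iff abs_of_nonneg M0)
    qed
    also have "\<dots> = card S * M\<^sup>2" by simp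
    also have "\<dots> \<le> 2 ^ (n+1) * M\<^sup>2"
    proof (rule mult_right_mono)
      have "real (card S) \<le> real (2 ^ (n+1))" using cS by (rule of_nat_mono)
      then show "real (card S) \<le> 2 ^ (n+1)" by simp
    qed simp
    also have "\<dots> \<le> (2 ^ (n+1) * M)\<^sup>2"
    proof -
      have "(1::real) \<le> 2 ^ (n+1)" by (rule one_le_power) simp
      then have "(2::real) ^ (n+1) \<le> (2 ^ (n+1))\<^sup>2" by (simp add: power2_eq_square)
      then have "(2::real) ^ (n+1) * M\<^sup>2 \<le> (2 ^ (n+1))\<^sup>2 * M\<^sup>2"
        by (rule mult_right_mono) simp
      then show ?thesis by (simp only: power_mult_distrib)
    qed
    finally have "ext_norm n j w \<le> sqrt ((2 ^ (n+1) * M)\<^sup>2)"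
      unfolding ext_norm_def S_def by (rule real_sqrt_le_mono)
    also have "\<dots> = 2 ^ (n+1) * M" using M0 by simp
    also have "\<dots> = K * (1 + proj_norm n s j w)" unfolding K_def M_def P_def by simp
    finally show "ext_norm n j w \<le> K * (1 + proj_norm n s j w)" .
  qed
qed

end
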